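(* Let $X_1,\dots,X_n$ be i.i.d. real random variables with well-defined mean $\mu$ and variance $\sigma^2<+\infty$. Let $0<x\leq \sqrt{n/(\sqrt{2}+1)^2-2}$ and set $k(x):=\lceil x^2/2\rceil$. Then \[\Pr\left(|\overline{X}_{n,k(x)}-\mu|>\frac{(3\sqrt{2}+8+(4+4\sqrt{2})\,x)\,\sigma}{\sqrt{n}}\right)\leq 4\exp\left(-\frac{x^2}{2}\right).\]
   Context: For $X_{(1)}\leq\dots\leq X_{(n)}$ the order statistics of the sample and an integer $0\le k<n/2$, the $k$-trimmed mean is $\overline{X}_{n,k}:=\frac{1}{n-2k}\sum_{i=k+1}^{n-k}X_{(i)}$. *)

theory Defs
  imports "HOL-Probability.Probability"
begin

text \<open>Order statistics of a sample xs are the entries of sort xs (0-based).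
  The k-trimmed mean averages the entries with 1-based indices k+1 .. n-k.\<close>
definition trimmed_mean :: "nat \<Rightarrow> real list \<Rightarrow> real" where
  "trimmed_mean k xs =
     (\<Sum>i = k..<length xs - k. sort xs ! i) / real (length xs - 2 * k)"

end

theory Submission
  imports Defs
begin



lemma (in prob_space) chernoff_iid:
  fixes X :: "nat \<Rightarrow> 'a \<Rightarrow> real" and g :: "real \<Rightarrow> real"
  assumes rv: "\<And>i. i < n \<Longrightarrow> X i \<in> borel_measurable M"
    and ind: "indep_vars (\<lambda>_. borel) X {..<n}"
    and dist: "\<And>i. i < n \<Longrightarrow> distr M borel (X i) = distr M borel (X 0)"
    and g[measurable]: "g \<in> borel_measurable borel" and gB: "\<And>v. \<bar>g v\<bar> \<le> B"
    and l: "l > 0" and n: "n > 0"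
  shows "prob {\<omega>\<in>space M. (\<Sum>i<n. g (X i \<omega>)) \<ge> \<epsilon>}
           \<le> exp (-l*\<epsilon>) * (expectation (\<lambda>\<omega>. exp (l * g (X 0 \<omega>)))) ^ n"
proof -
  have X0[measurable]: "X 0 \<in> borel_measurable M" using rv n by auto
  have rvm[measurable]: "X i \<in> borel_measurable M" if "i \<in> {..<n}" for i using rv that by auto
  have intg: "integrable M (\<lambda>\<omega>. exp (l * g (X i \<omega>)))" if "i < n" for i
  proof (rule integrable_const_bound[where B="exp (l*B)"])
    show "AE x in M. norm (exp (l * g (X i x))) \<le> exp (l * B)"
    proof (intro AE_I2)
      fix x have "g (X i x) \<le> B" using abs_le_D1[OF gB] by blast
      then show "norm (exp (l * g (X i x))) \<le> exp (l * B)" using l by (simp add: mult_left_mono)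
    qed
  qed (use rv that in auto)
  have eq: "expectation (\<lambda>\<omega>. exp (l * g (X i \<omega>))) = expectation (\<lambda>\<omega>. exp (l * g (X 0 \<omega>)))"
    if "i < n" for i
  proof -
    have "expectation (\<lambda>\<omega>. exp (l * g (X i \<omega>))) = integral\<^sup>L (distr M borel (X i)) (\<lambda>v. exp (l * g v))"
      using rv[OF that] by (subst integral_distr) auto
    also have "\<dots> = integral\<^sup>L (distr M borel (X 0)) (\<lambda>v. exp (l * g v))" using dist[OF that] by simp
    also have "\<dots> = expectation (\<lambda>\<omega>. exp (l * g (X 0 \<omega>)))"
      by (subst integral_distr) auto
    finally show ?thesis .
  qed
  have "ennreal (prob {\<omega>\<in>space M. (\<Sum>i<n. g (X i \<omega>)) \<ge> \<epsilon>}) = emeasure M {\<omega>\<in>space M. (\<Sum>i<n. g (X i \<omega>)) \<ge> \<epsilon>}"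
    by (simp add: emeasure_eq_measure)
  also have "\<dots> \<le> ennreal (exp (-l*\<epsilon>)) * (\<integral>\<^sup>+\<omega>. ennreal (exp (l * (\<Sum>i<n. g (X i \<omega>)))) * indicator (space M) \<omega> \<partial>M)"
    by (intro Chernoff_ineq_nn_integral_ge l) auto
  also have "(\<integral>\<^sup>+\<omega>. ennreal (exp (l * (\<Sum>i<n. g (X i \<omega>)))) * indicator (space M) \<omega> \<partial>M)
      = (\<integral>\<^sup>+\<omega>. (\<Prod>i<n. ennreal (exp (l * g (X i \<omega>)))) \<partial>M)"
    by (intro nn_integral_cong)
       (simp_all add: sum_distrib_left exp_sum prod_ennreal)
  also have "\<dots> = (\<Prod>i<n. \<integral>\<^sup>+\<omega>. ennreal (exp (l * g (X i \<omega>))) \<partial>M)"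
    by (intro indep_vars_nn_integral indep_vars_compose2[OF ind]) auto
  also have "\<dots> = (\<Prod>i<n. ennreal (expectation (\<lambda>\<omega>. exp (l * g (X 0 \<omega>)))))"
  proof (intro prod.cong refl)
    fix i assume i: "i \<in> {..<n}"
    have "(\<integral>\<^sup>+\<omega>. ennreal (exp (l * g (X i \<omega>))) \<partial>M) = ennreal (expectation (\<lambda>\<omega>. exp (l * g (X i \<omega>))))"
      using i intg by (intro nn_integral_eq_integral) auto
    then show "(\<integral>\<^sup>+\<omega>. ennreal (exp (l * g (X i \<omega>))) \<partial>M) = ennreal (expectation (\<lambda>\<omega>. exp (l * g (X 0 \<omega>))))"
      using eq[of i] i by simp
  qed
  also have "ennreal (exp (-l*\<epsilon>)) * \<dots> = ennreal (exp (-l*\<epsilon>) * (expectation (\<lambda>\<omega>. exp (l * g (X 0 \<omega>)))) ^ n)"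
    by (simp add: prod_ennreal ennreal_mult ennreal_power)
  finally show ?thesis
    by (subst (asm) ennreal_le_iff) (auto intro!: mult_nonneg_nonneg zero_le_power)
qed



definition clip :: "real \<Rightarrow> real \<Rightarrow> real" where
  "clip a y = max (-a) (min a y)"

lemma sum_list_map_sort: "(\<Sum>v\<leftarrow>sort xs. f v) = (\<Sum>v\<leftarrow>xs. (f v :: real))"
proof -
  have "(\<Sum>v\<leftarrow>sort xs. f v) = sum_mset (mset (map f (sort xs)))" by (rule sum_mset_sum_list[symmetric])
  also have "mset (map f (sort xs)) = mset (map f xs)" by (simp only: mset_map mset_sort)
  also have "sum_mset (mset (map f xs)) = (\<Sum>v\<leftarrow>xs. f v)" by (rule sum_mset_sum_list)
  finally show ?thesis .
qed

lemma length_filter_sort: "length (filter P (sort xs)) = length (filter P xs)"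
proof -
  have "mset (filter P (sort xs)) = mset (filter P xs)" by (simp only: mset_filter mset_sort)
  from arg_cong[OF this, of size] show ?thesis by (simp only: size_mset)
qed

lemma trim_det:
  fixes xs :: "real list"
  assumes len: "length xs = n" and nk: "2*k < n" and a: "a \<ge> 0"
    and c1: "length (filter (\<lambda>v. v > m + a) xs) \<le> k"
    and c2: "length (filter (\<lambda>v. v < m - a) xs) \<le> k"
  shows "\<bar>(\<Sum>i=k..<n-k. sort xs ! i) - real (n-2*k) * m - (\<Sum>v\<leftarrow>xs. clip a (v - m))\<bar> \<le> 2*k*a"
proof -
  define s where "s = sort xs"
  have ls: "length s = n" using len by (simp add: s_def)
  have ss: "sorted s" by (simp add: s_def)
  have low: "m - a \<le> s ! k"
  proof (rule ccontr)
    assume "\<not> m - a \<le> s ! k"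
    hence lt: "s ! i < m - a" if "i \<le> k" for i
      using sorted_nth_mono[OF ss that] nk ls by fastforce
    have "{0..k} \<subseteq> {i. i < length s \<and> s ! i < m - a}" using lt nk ls by auto
    hence "card {0..k} \<le> card {i. i < length s \<and> s ! i < m - a}" by (intro card_mono) auto
    also have "\<dots> = length (filter (\<lambda>v. v < m - a) s)" by (simp add: length_filter_conv_card)
    also have "\<dots> \<le> k" using c2 by (simp add: s_def length_filter_sort)
    finally show False by simp
  qed
  have high: "s ! (n-k-1) \<le> m + a"
  proof (rule ccontr)
    assume "\<not> s ! (n-k-1) \<le> m + a"
    hence lt: "s ! i > m + a" if "n-k-1 \<le> i" "i < n" for i
      using sorted_nth_mono[OF ss that(1)] that ls by fastforce
    have "{n-k-1..<n} \<subseteq> {i. i < length s \<and> s ! i > m + a}" using lt nk ls by auto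
    hence "card {n-k-1..<n} \<le> card {i. i < length s \<and> s ! i > m + a}" by (intro card_mono) auto
    also have "\<dots> = length (filter (\<lambda>v. v > m + a) s)" by (simp add: length_filter_conv_card)
    also have "\<dots> \<le> k" using c1 by (simp add: s_def length_filter_sort)
    finally show False using nk by simp
  qed
  have mid: "clip a (s ! i - m) = s ! i - m" if "k \<le> i" "i < n - k" for i
  proof -
    have "s ! k \<le> s ! i" using sorted_nth_mono[OF ss that(1)] that ls by simp
    moreover have "s ! i \<le> s ! (n-k-1)" using sorted_nth_mono[OF ss, of i "n-k-1"] that ls by simp
    ultimately show ?thesis using low high by (simp add: clip_def)
  qed
  have cb: "\<bar>clip a y\<bar> \<le> a" for y using a by (simp add: clip_def)
  have "(\<Sum>v\<leftarrow>xs. clip a (v - m)) = (\<Sum>v\<leftarrow>s. clip a (v - m))" by (simp add: s_def sum_list_map_sort)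
  also have "\<dots> = (\<Sum>i<n. clip a (s ! i - m))"
    by (simp add: sum_list_sum_nth ls atLeast0LessThan)
  also have "\<dots> = (\<Sum>i=0..<k. clip a (s ! i - m)) + (\<Sum>i=k..<n-k. clip a (s ! i - m))
       + (\<Sum>i=n-k..<n. clip a (s ! i - m))"
  proof -
    have "(\<Sum>i<n. clip a (s ! i - m)) = (\<Sum>i=0..<n-k. clip a (s ! i - m)) + (\<Sum>i=n-k..<n. clip a (s ! i - m))"
      using nk by (simp add: atLeast0LessThan[symmetric] sum.atLeastLessThan_concat)
    moreover have "(\<Sum>i=0..<n-k. clip a (s ! i - m)) = (\<Sum>i=0..<k. clip a (s ! i - m)) + (\<Sum>i=k..<n-k. clip a (s ! i - m))"
      using nk by (simp add: sum.atLeastLessThan_concat)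
    ultimately show ?thesis by simp
  qed
  also have "(\<Sum>i=k..<n-k. clip a (s ! i - m)) = (\<Sum>i=k..<n-k. s ! i) - real (n-2*k) * m"
    using mid nk by (simp add: sum_subtractf)
  finally have eq: "(\<Sum>i=k..<n-k. s ! i) - real (n-2*k) * m - (\<Sum>v\<leftarrow>xs. clip a (v - m))
      = - ((\<Sum>i=0..<k. clip a (s ! i - m)) + (\<Sum>i=n-k..<n. clip a (s ! i - m)))" by simp
  have b1: "\<bar>\<Sum>i\<in>{0..<k}. clip a (s ! i - m)\<bar> \<le> k * a"
  proof -
    have "\<bar>\<Sum>i\<in>{0..<k}. clip a (s ! i - m)\<bar> \<le> (\<Sum>i\<in>{0..<k}. \<bar>clip a (s ! i - m)\<bar>)" by (rule sum_abs)
    also have "\<dots> \<le> (\<Sum>i\<in>{0..<k}. a)" by (rule sum_mono) (rule cb)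
    also have "\<dots> = k * a" by simp
    finally show ?thesis .
  qed
  have b2: "\<bar>\<Sum>i\<in>{n-k..<n}. clip a (s ! i - m)\<bar> \<le> k * a"
  proof -
    have "\<bar>\<Sum>i\<in>{n-k..<n}. clip a (s ! i - m)\<bar> \<le> (\<Sum>i\<in>{n-k..<n}. \<bar>clip a (s ! i - m)\<bar>)" by (rule sum_abs)
    also have "\<dots> \<le> (\<Sum>i\<in>{n-k..<n}. a)" by (rule sum_mono) (rule cb)
    also have "\<dots> = k * a" using nk by simp
    finally show ?thesis .
  qed
  show ?thesis unfolding s_def[symmetric] eq using b1 b2 by simp
qed





lemma exp_le_quad: fixes x :: real assumes "\<bar>x\<bar> \<le> 1" shows "exp x \<le> 1 + x + x\<^sup>2"
proof (cases "x \<ge> 0")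
  case True then show ?thesis using exp_bound[of x] assms by auto
next
  case False
  define y where "y = -x"
  have y: "y \<ge> 0" "y \<le> 1" using False assms by (auto simp: y_def)
  have e: "1 + y + y\<^sup>2 / 2 \<le> exp y" using exp_lower_Taylor_quadratic[OF y(1)] .
  have p: "1 \<le> (1 - y + y\<^sup>2) * (1 + y + y\<^sup>2 / 2)"
  proof -
    have "(1 - y + y\<^sup>2) * (1 + y + y\<^sup>2 / 2) = 1 + y\<^sup>2/2 + y^3/2 + y^4/2" by (simp add: power2_eq_square power3_eq_cube power4_eq_xxxx field_simps)
    moreover have "0 \<le> y\<^sup>2/2 + y^3/2 + y^4/2" using y by simp
    ultimately show ?thesis by linarith
  qed
  have q: "0 \<le> 1 - y + y\<^sup>2" using y(2) zero_le_power2[of y] by linarith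
  have "1 \<le> (1 - y + y\<^sup>2) * exp y" using p e q by (meson mult_left_mono order_trans)
  hence "exp (-y) \<le> 1 - y + y\<^sup>2" by (simp add: exp_minus field_simps)
  then show ?thesis by (simp add: y_def)
qed

lemma clip_bias: assumes "a > 0" shows "\<bar>clip a y - y\<bar> \<le> y\<^sup>2 / (4*a)"
proof -
  have "0 \<le> (\<bar>y\<bar> - 2*a)\<^sup>2" by simp
  hence h: "4*a*(\<bar>y\<bar> - a) \<le> y\<^sup>2" by (simp add: power2_eq_square algebra_simps)
  have "\<bar>clip a y - y\<bar> \<le> max 0 (\<bar>y\<bar> - a)" unfolding clip_def using assms by (auto simp: max_def min_def)
  also have "\<dots> \<le> y\<^sup>2 / (4*a)" using h assms by (auto simp: field_simps)
  finally show ?thesis .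
qed

lemma clip_sq: assumes "a > 0" shows "(clip a y)\<^sup>2 \<le> y\<^sup>2" "\<bar>clip a y\<bar> \<le> a" "(clip a y)\<^sup>2 \<le> a\<^sup>2"
  using assms unfolding clip_def by (auto simp: max_def min_def abs_le_square_iff[symmetric])

lemma clip_measurable[measurable]: "clip a \<in> borel_measurable borel"
  unfolding clip_def by measurable

lemma (in prob_space) clip_mgf:
  assumes V[measurable]: "V \<in> borel_measurable M" and V2: "integrable M (\<lambda>\<omega>. (V \<omega>)\<^sup>2)"
    and E0: "expectation V = 0" and a: "a > 0"
  shows "expectation (\<lambda>\<omega>. exp ((1/a) * clip a (V \<omega>))) \<le> exp (5 * expectation (\<lambda>\<omega>. (V \<omega>)\<^sup>2) / (4 * a\<^sup>2))"
proof -
  define v where "v = expectation (\<lambda>\<omega>. (V \<omega>)\<^sup>2)"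
  have Vi: "integrable M V" using V2 square_integrable_imp_integrable V by blast
  have ci: "integrable M (\<lambda>\<omega>. clip a (V \<omega>))"
    by (rule integrable_const_bound[where B=a]) (use clip_sq(2)[OF a] a in \<open>auto intro!: AE_I2\<close>)
  have c2i: "integrable M (\<lambda>\<omega>. (clip a (V \<omega>))\<^sup>2)"
    by (rule integrable_const_bound[where B="a\<^sup>2"]) (use clip_sq(3)[OF a] a in \<open>auto intro!: AE_I2\<close>)
  have ei: "integrable M (\<lambda>\<omega>. exp ((1/a) * clip a (V \<omega>)))"
  proof (rule integrable_const_bound[where B="exp 1"])
    show "AE x in M. norm (exp ((1/a) * clip a (V x))) \<le> exp 1"
    proof (intro AE_I2)
      fix x have "clip a (V x) \<le> a" using abs_le_D1[OF clip_sq(2)[OF a]] by blast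
      then show "norm (exp ((1/a) * clip a (V x))) \<le> exp 1" using a by (simp add: field_simps)
    qed
  qed auto
  have I1: "expectation (\<lambda>\<omega>. exp ((1/a) * clip a (V \<omega>)))
     \<le> expectation (\<lambda>\<omega>. 1 + (1/a) * clip a (V \<omega>) + (1/a)\<^sup>2 * (clip a (V \<omega>))\<^sup>2)"
  proof (rule integral_mono)
    show "integrable M (\<lambda>\<omega>. 1 + (1/a) * clip a (V \<omega>) + (1/a)\<^sup>2 * (clip a (V \<omega>))\<^sup>2)"
      using ci c2i by auto
    fix \<omega>
    have "\<bar>(1/a) * clip a (V \<omega>)\<bar> \<le> 1" using clip_sq(2)[OF a] a by (simp add: abs_mult field_simps)
    from exp_le_quad[OF this] show "exp ((1/a) * clip a (V \<omega>)) \<le> 1 + (1/a) * clip a (V \<omega>) + (1/a)\<^sup>2 * (clip a (V \<omega>))\<^sup>2"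
      by (simp only: power_mult_distrib)
  qed (rule ei)
  have I2: "expectation (\<lambda>\<omega>. 1 + (1/a) * clip a (V \<omega>) + (1/a)\<^sup>2 * (clip a (V \<omega>))\<^sup>2) = 1 + (1/a) * expectation (\<lambda>\<omega>. clip a (V \<omega>)) + (1/a)\<^sup>2 * expectation (\<lambda>\<omega>. (clip a (V \<omega>))\<^sup>2)"
    using ci c2i by (simp add: prob_space)
  have I3: "expectation (\<lambda>\<omega>. clip a (V \<omega>)) \<le> v / (4*a)"
  proof -
    have "expectation (\<lambda>\<omega>. clip a (V \<omega>)) = expectation (\<lambda>\<omega>. clip a (V \<omega>) - V \<omega>)"
      using ci Vi E0 by simp
    also have "\<dots> \<le> expectation (\<lambda>\<omega>. (V \<omega>)\<^sup>2 / (4*a))"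
      by (rule integral_mono) (use ci Vi V2 clip_bias[OF a] in \<open>auto dest: abs_le_D1\<close>)
    also have "\<dots> = v / (4*a)" by (simp add: v_def)
    finally show ?thesis .
  qed
  have I4: "expectation (\<lambda>\<omega>. (clip a (V \<omega>))\<^sup>2) \<le> v"
    unfolding v_def by (rule integral_mono) (use c2i V2 clip_sq(1)[OF a] in auto)
  have "expectation (\<lambda>\<omega>. exp ((1/a) * clip a (V \<omega>))) \<le> 1 + (1/a) * (v / (4*a)) + (1/a)\<^sup>2 * v"
    using I1 I2 I3 I4 a by (smt (verit) divide_le_cancel mult_left_mono zero_le_power2 divide_pos_pos)
  also have "\<dots> = 1 + 5 * v / (4 * a\<^sup>2)" using a by (simp add: field_simps power2_eq_square)
  also have "\<dots> \<le> exp (5 * v / (4 * a\<^sup>2))" by (rule exp_ge_add_one_self)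
  finally show ?thesis by (simp add: v_def)
qed



lemma final_alg:
  fixes \<sigma> N K x a eps :: real
  assumes s: "\<sigma> > 0" and N: "N > 0" and K: "K \<ge> 1" and x: "x > 0"
    and xK: "x\<^sup>2 \<le> 2*K" and Kx: "K \<le> x\<^sup>2/2 + 1" and NK: "N - 2*K \<ge> (2* sqrt 2 - 2) * N"
    and a: "a = 3 * \<sigma> *  sqrt N / sqrt K" and eps: "eps = 5*N*\<sigma>\<^sup>2/(4*a) + a*x\<^sup>2/2"
  shows "(2*K*a + eps) / (N - 2*K) \<le> (3 * sqrt 2 + 8 + (4 + 4 * sqrt 2) * x) * \<sigma> / sqrt N"
proof -
  define r where "r = sqrt K"
  define q where "q = sqrt N"
  define t where "t = sqrt 2"
  have r: "r > 0" "r\<^sup>2 = K" using K by (auto simp: r_def)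
  have q: "q > 0" "q\<^sup>2 = N" using N by (auto simp: q_def)
  have t0: "t \<ge> 0" and tt: "t\<^sup>2 = 2" unfolding t_def by auto
  have tl: "t > 1.41"
  proof (rule ccontr)
    assume "\<not> t > 1.41" hence "t\<^sup>2 \<le> 1.41\<^sup>2" using t0 by (intro power_mono) auto
    with tt show False by (simp add: power2_eq_square)
  qed
  have tu: "t < 1.42"
  proof (rule ccontr)
    assume "\<not> t < 1.42" hence "1.42\<^sup>2 \<le> t\<^sup>2" by (intro power_mono) auto
    with tt show False by (simp add: power2_eq_square)
  qed
  note t = tt tl tu
  have NKt: "N - 2*K \<ge> (2*t - 2) * N" using NK by (simp add: t_def)
  have "(2*t-2)*N > 0" using tl N by (intro mult_pos_pos) auto
  hence ge0: "N - 2*K > 0" using NKt by linarith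
  have sum: "2*K*a + eps = \<sigma> * q * (77 * r / 12 + 3 * x\<^sup>2 / (2*r))"
  proof -
    have KK: "K = r*r" and NN: "N = q*q" using r q by (auto simp: power2_eq_square)
    show ?thesis
      using r q s unfolding a eps r_def[symmetric] q_def[symmetric] KK NN
      by (simp add: field_simps power2_eq_square)
  qed
  have tp: "t > 0" using tl by simp
  have xr: "x \<le> t * r"
  proof -
    have "x\<^sup>2 \<le> (t*r)\<^sup>2" using xK r tt by (simp add: power_mult_distrib)
    then show ?thesis by (rule power2_le_imp_le) (use r tp in simp)
  qed
  have x2r: "x\<^sup>2 / r \<le> t * x"
  proof -
    have "x * x \<le> (t * r) * x" using xr x by (intro mult_right_mono) auto
    thus ?thesis using r by (simp add: divide_le_eq power2_eq_square mult_ac)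
  qed
  have rx: "r \<le> x / t + 1"
  proof -
    have e: "(x/t + 1)\<^sup>2 = x\<^sup>2/t\<^sup>2 + 2*(x/t) + 1" using tp by (simp add: power2_eq_square field_simps)
    have "0 \<le> x / t" using x tp by simp
    hence "r\<^sup>2 \<le> (x/t + 1)\<^sup>2" unfolding e tt using Kx r by simp
    then show ?thesis by (rule power2_le_imp_le) (use x tp in \<open>simp add: add_nonneg_nonneg\<close>)
  qed
  define B where "B = 77 * r / 12 + 3 * x\<^sup>2 / (2*r)"
  define C where "C = 3 * t + 8 + (4 + 4 * t) * x"
  have B: "B \<le> C * (2*t - 2)"
  proof -
    have CC: "C * (2*t - 2) = 10 * t - 4 + 8 * x"
    proof -
      have "t*t = 2" using tt by (simp add: power2_eq_square)
      have A1: "(3*t+8)*(2*t-2) = 6*(t*t) + 10*t - 16" by (simp add: algebra_simps)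
      have A2: "(4+4*t)*(2*t-2) = 8*(t*t) - 8" by (simp add: algebra_simps)
      have "C * (2*t - 2) = (3*t+8)*(2*t-2) + ((4+4*t)*(2*t-2))*x" unfolding C_def by (simp add: algebra_simps)
      thus ?thesis unfolding A1 A2 \<open>t*t = 2\<close> by simp
    qed
    have h: "3 * x\<^sup>2 / (2*r) = 3/2 * (x\<^sup>2 / r)" by simp
    have "B \<le> 77 / 12 * (x / t + 1) + 3/2 * (t * x)" unfolding B_def h using rx x2r by (intro add_mono) simp_all
    also have "x / t = t * x / 2" using tt tp by (simp add: field_simps power2_eq_square)
    also have "77 / 12 * (t * x / 2 + 1) + 3/2 * (t * x) \<le> 10 * t - 4 + 8 * x"
    proof -
      have tx: "t * x \<le> (142/100) * x" using tu x by (intro mult_right_mono) auto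
      have tl': "t > 141/100" using tl by simp
      have eqq: "77 / 12 * (t * x / 2 + 1) + 3/2 * (t * x) = 113/24 * (t * x) + 77/12" by (simp add: field_simps)
      show ?thesis unfolding eqq using tx tl' x by linarith
    qed
    also have "\<dots> = C * (2*t - 2)" using CC by simp
    finally show ?thesis .
  qed
  have C0: "C > 0" unfolding C_def using tp x by (simp add: add_pos_pos)
  have "B * N \<le> C * (2*t - 2) * N" using B N by simp
  also have "\<dots> \<le> C * (N - 2*K)" using NKt C0 by (simp add: mult.assoc mult_left_mono)
  finally have BN: "B * N \<le> C * (N - 2*K)" .
  have NN: "N = q*q" using q by (simp add: power2_eq_square)
  define D where "D = N - 2*K"
  have D: "D > 0" using ge0 by (simp add: D_def)
  have BN': "B * N \<le> C * D" using BN by (simp add: D_def)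
  have "(2*K*a + eps) / D = (\<sigma> * (B * N)) / (q * D)"
    unfolding sum B_def[symmetric] NN using q D by (simp add: field_simps)
  also have "\<dots> \<le> (\<sigma> * (C * D)) / (q * D)"
    using BN' s q D by (intro divide_right_mono mult_left_mono) auto
  also have "\<dots> = C * \<sigma> / q" using D q by (simp add: field_simps)
  finally have "(2*K*a + eps) / D \<le> C * \<sigma> / q" .
  then show ?thesis by (simp add: D_def C_def t_def q_def)
qed




lemma (in prob_space) count_mgf:
  assumes V[measurable]: "V \<in> borel_measurable M" and B[measurable]: "B \<in> sets borel"
  shows "expectation (\<lambda>\<omega>. exp (2 * indicator B (V \<omega>))) \<le> exp ((exp 2 - 1) * prob {\<omega>\<in>space M. V \<omega> \<in> B})"
proof -
  define S where "S = {\<omega>\<in>space M. V \<omega> \<in> B}"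
  have S[measurable]: "S \<in> sets M" unfolding S_def by measurable
  have "expectation (\<lambda>\<omega>. exp (2 * indicator B (V \<omega>))) = expectation (\<lambda>\<omega>. 1 + (exp 2 - 1) * indicator S \<omega>)"
    by (intro Bochner_Integration.integral_cong refl) (auto simp: S_def indicator_def)
  also have "\<dots> = 1 + (exp 2 - 1) * prob S"
  proof -
    have ii: "integrable M (indicator S :: 'a \<Rightarrow> real)"
      using S by (intro integrable_real_indicator) (auto simp: less_top[symmetric])
    have "S \<inter> space M = S" using S sets.sets_into_space by blast
    then show ?thesis using ii by (simp add: prob_space)
  qed
  also have "\<dots> \<le> exp ((exp 2 - 1) * prob S)" by (rule exp_ge_add_one_self)
  finally show ?thesis by (simp add: S_def)
qed

lemma exp2_le: "exp (2::real) \<le> 10"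
proof -
  have "exp (2::real) = exp 1 * exp 1" by (simp flip: exp_add)
  also have "\<dots> \<le> 3 * 3" using exp_le by (intro mult_mono) auto
  finally show ?thesis by simp
qed

lemma (in prob_space) count_tail:
  fixes X :: "nat \<Rightarrow> 'a \<Rightarrow> real"
  assumes rv: "\<And>i. i < n \<Longrightarrow> X i \<in> borel_measurable M"
    and ind: "indep_vars (\<lambda>_. borel) X {..<n}"
    and dist: "\<And>i. i < n \<Longrightarrow> distr M borel (X i) = distr M borel (X 0)"
    and n: "n > 0" and B[measurable]: "B \<in> sets borel"
    and p: "prob {\<omega>\<in>space M. X 0 \<omega> \<in> B} \<le> K / (9 * n)"
    and K: "K \<ge> x\<^sup>2 / 2"
  shows "prob {\<omega>\<in>space M. (\<Sum>i<n. indicator B (X i \<omega>)) \<ge> K + 1} \<le> exp (- (x\<^sup>2 / 2))"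
proof -
  have X0[measurable]: "X 0 \<in> borel_measurable M" using rv n by auto
  define p where "p = prob {\<omega>\<in>space M. X 0 \<omega> \<in> B}"
  have "prob {\<omega>\<in>space M. (\<Sum>i<n. indicator B (X i \<omega>)) \<ge> K + 1}
      \<le> exp (-2*(K+1)) * (expectation (\<lambda>\<omega>. exp (2 * indicator B (X 0 \<omega>)))) ^ n"
    by (rule chernoff_iid[OF rv ind dist, where B=1]) (auto simp: n indicator_def)
  also have "\<dots> \<le> exp (-2*(K+1)) * (exp ((exp 2 - 1) * p)) ^ n"
    unfolding p_def
    by (intro mult_left_mono power_mono count_mgf X0 B integral_nonneg_AE) auto
  also have "\<dots> = exp (-2*(K+1) + n * ((exp 2 - 1) * p))"
    by (simp add: exp_add exp_of_nat_mult[symmetric])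
  also have "\<dots> \<le> exp (- (x\<^sup>2 / 2))"
  proof -
    have p0: "p \<ge> 0" by (simp add: p_def)
    have "n * ((exp 2 - 1) * p) \<le> n * (9 * (K / (9*n)))"
      using exp2_le p p0 unfolding p_def[symmetric]
      by (intro mult_left_mono mult_mono) auto
    also have "\<dots> = K" using n by simp
    finally show ?thesis using K by simp
  qed
  finally show ?thesis .
qed

lemma (in prob_space) clip_tail:
  fixes X :: "nat \<Rightarrow> 'a \<Rightarrow> real" and f :: "real \<Rightarrow> real"
  assumes rv: "\<And>i. i < n \<Longrightarrow> X i \<in> borel_measurable M"
    and ind: "indep_vars (\<lambda>_. borel) X {..<n}"
    and dist: "\<And>i. i < n \<Longrightarrow> distr M borel (X i) = distr M borel (X 0)"
    and n: "n > 0" and f[measurable]: "f \<in> borel_measurable borel"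
    and V2: "integrable M (\<lambda>\<omega>. (f (X 0 \<omega>))\<^sup>2)" and E0: "expectation (\<lambda>\<omega>. f (X 0 \<omega>)) = 0"
    and v: "expectation (\<lambda>\<omega>. (f (X 0 \<omega>))\<^sup>2) = v" and a: "a > 0"
  shows "prob {\<omega>\<in>space M. (\<Sum>i<n. clip a (f (X i \<omega>))) \<ge> 5 * real n * v / (4 * a) + a * x\<^sup>2 / 2}
           \<le> exp (- (x\<^sup>2 / 2))"
proof -
  have X0[measurable]: "X 0 \<in> borel_measurable M" using rv n by auto
  have "prob {\<omega>\<in>space M. (\<Sum>i<n. clip a (f (X i \<omega>))) \<ge> 5 * real n * v / (4 * a) + a * x\<^sup>2 / 2}
      \<le> exp (-(1/a)*(5 * real n * v / (4 * a) + a * x\<^sup>2 / 2)) * (expectation (\<lambda>\<omega>. exp ((1/a) * clip a (f (X 0 \<omega>))))) ^ n"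
    by (rule chernoff_iid[OF rv ind dist, where B=a and g="\<lambda>v. clip a (f v)"]) (use a n clip_sq(2)[OF a] in auto)
  also have "\<dots> \<le> exp (-(1/a)*(5 * real n * v / (4 * a) + a * x\<^sup>2 / 2)) * (exp (5 * v / (4 * a\<^sup>2))) ^ n"
    using clip_mgf[of "\<lambda>\<omega>. f (X 0 \<omega>)", OF _ V2 E0 a] unfolding v
    by (intro mult_left_mono power_mono integral_nonneg_AE) auto
  also have "\<dots> = exp (-(1/a)*(5 * real n * v / (4 * a) + a * x\<^sup>2 / 2) + n * (5 * v / (4 * a\<^sup>2)))"
    by (simp only: exp_add exp_of_nat_mult)
  also have "-(1/a)*(5 * real n * v / (4 * a) + a * x\<^sup>2 / 2) + n * (5 * v / (4 * a\<^sup>2)) = - (x\<^sup>2 / 2)"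
    using a by (simp add: field_simps power2_eq_square)
  finally show ?thesis .
qed

lemma len_filter_map_upt:
  "real (length (filter (\<lambda>v. v \<in> B) (map f [0..<n]))) = (\<Sum>i<n. indicator B (f i))"
  by (induct n) (auto simp: indicator_def)

lemma sum_list_map_upt: "(\<Sum>v\<leftarrow>map f [0..<n]. h v) = (\<Sum>i<n. (h (f i) :: real))"
  by (induct n) auto





lemma clip_neg: "a \<ge> 0 \<Longrightarrow> clip a (-y) = - clip a y"
  by (auto simp: clip_def max_def min_def)

theorem theorem1p1:
  fixes M :: "'a measure" and X :: "nat \<Rightarrow> 'a \<Rightarrow> real"
    and n :: nat and x \<mu> \<sigma> :: real
  assumes "prob_space M"
    and "\<And>i. i < n \<Longrightarrow> X i \<in> borel_measurable M"
    and "prob_space.indep_vars M (\<lambda>_. borel) X {..<n}"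
    and "\<And>i. i < n \<Longrightarrow> distr M borel (X i) = distr M borel (X 0)"
    and "integrable M (X 0)"
    and "integrable M (\<lambda>\<omega>. (X 0 \<omega>)\<^sup>2)"
    and "\<mu> = prob_space.expectation M (X 0)"
    and "\<sigma> = sqrt (prob_space.variance M (X 0))"
    and "0 < x"
    and "x \<le> sqrt (real n / (sqrt 2 + 1)\<^sup>2 - 2)"
  shows "measure M {\<omega> \<in> space M.
           \<bar>trimmed_mean (nat \<lceil>x\<^sup>2 / 2\<rceil>) (map (\<lambda>i. X i \<omega>) [0..<n]) - \<mu>\<bar>
             > (3 * sqrt 2 + 8 + (4 + 4 * sqrt 2) * x) * \<sigma> / sqrt (real n)}
         \<le> 4 * exp (- (x\<^sup>2 / 2))"
proof -
  interpret P: prob_space M by (rule assms(1))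
  note rv = assms(2) and ind = assms(3) and dist = assms(4)
  define k where "k = nat \<lceil>x\<^sup>2 / 2\<rceil>"
  define K where "K = real k"
  define thr where "thr = (3 * sqrt 2 + 8 + (4 + 4 * sqrt 2) * x) * \<sigma> / sqrt (real n)"
  define tm where "tm = (\<lambda>\<omega>. trimmed_mean k (map (\<lambda>i. X i \<omega>) [0..<n]))"
  define Ev where "Ev = {\<omega> \<in> space M. \<bar>tm \<omega> - \<mu>\<bar> > thr}"
  have x2: "x\<^sup>2 \<le> real n / (sqrt 2 + 1)\<^sup>2 - 2"
  proof -
    have "0 < sqrt (real n / (sqrt 2 + 1)\<^sup>2 - 2)" using assms(9,10) by linarith
    hence y0: "0 < real n / (sqrt 2 + 1)\<^sup>2 - 2" by simp
    have "x\<^sup>2 \<le> (sqrt (real n / (sqrt 2 + 1)\<^sup>2 - 2))\<^sup>2" using assms(9,10) by (intro power_mono) auto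
    thus ?thesis using y0 by simp
  qed
  have c0: "0 \<le> \<lceil>x\<^sup>2 / 2\<rceil>"
  proof -
    have "(-2::real) < x\<^sup>2" using zero_le_power2[of x] by linarith
    thus ?thesis by (simp add: zero_le_ceiling)
  qed
  have Kc: "K = real_of_int \<lceil>x\<^sup>2 / 2\<rceil>" unfolding K_def k_def using c0 by simp
  have K1: "x\<^sup>2 / 2 \<le> K" unfolding Kc by (rule le_of_int_ceiling)
  have K2: "K \<le> x\<^sup>2 / 2 + 1" unfolding Kc by (rule of_int_ceiling_le_add_one)
  have "K > 0" using K1 assms(9) by (smt (verit) zero_less_power divide_pos_pos)
  hence K3: "K \<ge> 1" unfolding K_def by simp
  have s22: "sqrt 2 * sqrt 2 = (2::real)" by simp
  have sq: "(sqrt 2 + 1)\<^sup>2 = 3 + 2 * sqrt (2::real)"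
    by (simp add: power2_eq_square algebra_simps)
  have inv: "real n / (sqrt 2 + 1)\<^sup>2 = real n * (3 - 2 * sqrt 2)"
  proof -
    have pr: "(3 + 2 * sqrt 2) * (3 - 2 * sqrt 2) = (1::real)" by (simp add: algebra_simps)
    have nz: "3 + 2 * sqrt 2 \<noteq> (0::real)" by (smt (verit) real_sqrt_ge_zero)
    show ?thesis unfolding sq using pr nz by (simp add: field_simps)
  qed
  have NK: "real n - 2 * K \<ge> (2 * sqrt 2 - 2) * real n"
  proof -
    have "2 * K \<le> real n * (3 - 2 * sqrt 2)" using x2 K2 inv by linarith
    thus ?thesis by (simp add: algebra_simps)
  qed
  have s2g: "sqrt 2 > (1::real)" by simp
  have n0: "n > 0"
  proof (rule ccontr)
    assume "\<not> n > 0" hence "n = 0" by simp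
    thus False using NK K3 by simp
  qed
  have "(2 * sqrt 2 - 2) * real n > 0" using s2g n0 by (intro mult_pos_pos) auto
  hence "2 * K < real n" using NK by linarith
  hence nk: "2 * k < n" unfolding K_def by linarith
  have rn: "real (n - 2*k) = real n - 2 * K" using nk by (simp add: K_def of_nat_diff)
  have \<sigma>0: "\<sigma> \<ge> 0" by (simp add: assms(8))
  have X0[measurable]: "X 0 \<in> borel_measurable M" using rv n0 by auto
  have Xi[measurable]: "X i \<in> borel_measurable M" if "i \<in> {..<n}" for i using rv that by auto
  have var0: "0 \<le> prob_space.variance M (X 0)" by (intro integral_nonneg_AE AE_I2) auto
  have s2: "\<sigma>\<^sup>2 = prob_space.variance M (X 0)" using var0 by (simp add: assms(8))
  have int2: "integrable M (\<lambda>\<omega>. (X 0 \<omega> - \<mu>)\<^sup>2)"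
  proof -
    have "(\<lambda>\<omega>. (X 0 \<omega> - \<mu>)\<^sup>2) = (\<lambda>\<omega>. (X 0 \<omega>)\<^sup>2 - 2 * \<mu> * X 0 \<omega> + \<mu>\<^sup>2)"
      by (simp add: power2_diff algebra_simps)
    thus ?thesis using assms(5,6) by simp
  qed
  have EV: "P.expectation (\<lambda>\<omega>. X 0 \<omega> - \<mu>) = 0"
    using assms(5,7) by (simp add: P.prob_space)
  have varmu: "prob_space.variance M (X 0) = P.expectation (\<lambda>\<omega>. (X 0 \<omega> - \<mu>)\<^sup>2)"
    using assms(7) by simp
  have tm_eq: "tm \<omega> = (\<Sum>i = k..<n - k. sort (map (\<lambda>i. X i \<omega>) [0..<n]) ! i) / (real n - 2 * K)" for \<omega>
    unfolding tm_def trimmed_mean_def using rn by simp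
  show ?thesis
  proof (cases "\<sigma> = 0")
    case True
    have "P.expectation (\<lambda>\<omega>. (X 0 \<omega> - \<mu>)\<^sup>2) = 0" using s2 varmu True by simp
    hence "AE \<omega> in M. (X 0 \<omega> - \<mu>)\<^sup>2 = 0"
      by (subst (asm) integral_nonneg_eq_0_iff_AE[OF int2]) auto
    hence AE0: "AE \<omega> in M. X 0 \<omega> = \<mu>" by simp
    have AEi: "AE \<omega> in M. X i \<omega> = \<mu>" if i: "i \<in> {..<n}" for i
    proof -
      have h0: "AE v in distr M borel (X 0). v = \<mu>" using AE0 by (subst AE_distr_iff) auto
      have eqd: "distr M borel (X i) = distr M borel (X 0)" using dist[of i] i by simp
      have "AE v in distr M borel (X i). v = \<mu>" unfolding eqd by (rule h0)
      thus ?thesis using i by (subst (asm) AE_distr_iff) auto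
    qed
    have "AE \<omega> in M. \<forall>i\<in>{..<n}. X i \<omega> = \<mu>" by (rule AE_finite_allI) (use AEi in auto)
    then obtain N where N: "{\<omega>\<in>space M. \<not> (\<forall>i\<in>{..<n}. X i \<omega> = \<mu>)} \<subseteq> N" "emeasure M N = 0" "N \<in> sets M"
      by (elim AE_E) auto
    have sub: "Ev \<subseteq> N"
    proof
      fix \<omega> assume \<omega>: "\<omega> \<in> Ev"
      show "\<omega> \<in> N"
      proof (rule ccontr)
        assume "\<omega> \<notin> N"
        hence all: "\<forall>i\<in>{..<n}. X i \<omega> = \<mu>" using N(1) \<omega> by (auto simp: Ev_def)
        have "map (\<lambda>i. X i \<omega>) [0..<n] = map (\<lambda>i. \<mu>) [0..<n]" using all by (intro map_cong) auto
        also have "\<dots> = replicate n \<mu>" by (simp add: map_replicate_const)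
        finally have mp: "map (\<lambda>i. X i \<omega>) [0..<n] = replicate n \<mu>" .
        have "(\<Sum>i = k..<n - k. sort (replicate n \<mu>) ! i) = (\<Sum>i = k..<n - k. \<mu>)"
          by (intro sum.cong refl) auto
        also have "\<dots> = (real n - 2 * K) * \<mu>" using rn nk by simp
        finally have "tm \<omega> = \<mu>" unfolding tm_eq mp using nk rn \<open>2 * K < real n\<close> by simp
        moreover have "thr = 0" unfolding thr_def True by simp
        ultimately show False using \<omega> by (simp add: Ev_def)
      qed
    qed
    have "measure M Ev \<le> measure M N" using sub N(3) by (rule P.finite_measure_mono)
    also have "\<dots> = 0" using N(2) by (simp add: P.emeasure_eq_measure)
    also have "(0::real) \<le> 4 * exp (- (x\<^sup>2 / 2))" by simp
    finally show ?thesis unfolding Ev_def thr_def tm_def k_def by simp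
  next
    case False
    hence \<sigma>p: "\<sigma> > 0" using \<sigma>0 by simp
    define a where "a = 3 * \<sigma> * sqrt (real n) / sqrt K"
    define eps where "eps = 5 * real n * \<sigma>\<^sup>2 / (4 * a) + a * x\<^sup>2 / 2"
    have a0: "a > 0" unfolding a_def using \<sigma>p n0 K3 by simp
    have a2: "\<sigma>\<^sup>2 / a\<^sup>2 = K / (9 * real n)"
      unfolding a_def using \<sigma>p n0 K3 by (simp add: field_simps power2_eq_square power_mult_distrib)
    have cheb: "P.prob {\<omega>\<in>space M. \<bar>X 0 \<omega> - \<mu>\<bar> \<ge> a} \<le> K / (9 * real n)"
      using P.Chebyshev_inequality[OF X0 assms(6) a0] assms(7) s2 a2 by simp
    have p1: "P.prob {\<omega>\<in>space M. X 0 \<omega> \<in> {\<mu>+a<..}} \<le> K / (9 * real n)"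
      by (rule order_trans[OF P.finite_measure_mono cheb]) auto
    have p2: "P.prob {\<omega>\<in>space M. X 0 \<omega> \<in> {..<\<mu>-a}} \<le> K / (9 * real n)"
      by (rule order_trans[OF P.finite_measure_mono cheb]) auto
    define A1 where "A1 = {\<omega>\<in>space M. (\<Sum>i<n. indicator {\<mu>+a<..} (X i \<omega>)) \<ge> K + 1}"
    define A2 where "A2 = {\<omega>\<in>space M. (\<Sum>i<n. indicator {..<\<mu>-a} (X i \<omega>)) \<ge> K + 1}"
    define A3 where "A3 = {\<omega>\<in>space M. (\<Sum>i<n. clip a (X i \<omega> - \<mu>)) \<ge> eps}"
    define A4 where "A4 = {\<omega>\<in>space M. (\<Sum>i<n. clip a (\<mu> - X i \<omega>)) \<ge> eps}"
    have b1: "P.prob A1 \<le> exp (- (x\<^sup>2 / 2))" unfolding A1_def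
      by (rule P.count_tail[OF rv ind dist n0 _ p1 K1]) auto
    have b2: "P.prob A2 \<le> exp (- (x\<^sup>2 / 2))" unfolding A2_def
      by (rule P.count_tail[OF rv ind dist n0 _ p2 K1]) auto
    have b3: "P.prob A3 \<le> exp (- (x\<^sup>2 / 2))" unfolding A3_def eps_def
      using P.clip_tail[OF rv ind dist n0, of "\<lambda>v. v - \<mu>" "\<sigma>\<^sup>2" a x] int2 EV varmu s2 a0 by simp
    have b4: "P.prob A4 \<le> exp (- (x\<^sup>2 / 2))" unfolding A4_def eps_def
    proof -
      have i2: "integrable M (\<lambda>\<omega>. (\<mu> - X 0 \<omega>)\<^sup>2)" using int2 by (simp add: power2_commute)
      have e0: "P.expectation (\<lambda>\<omega>. \<mu> - X 0 \<omega>) = 0" using assms(5,7) by (simp add: P.prob_space)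
      have e2: "P.expectation (\<lambda>\<omega>. (\<mu> - X 0 \<omega>)\<^sup>2) = \<sigma>\<^sup>2" using varmu s2 by (simp add: power2_commute)
      show "P.prob {\<omega>\<in>space M. (\<Sum>i<n. clip a (\<mu> - X i \<omega>)) \<ge> 5 * real n * \<sigma>\<^sup>2 / (4 * a) + a * x\<^sup>2 / 2} \<le> exp (- (x\<^sup>2 / 2))"
        using P.clip_tail[OF rv ind dist n0, of "\<lambda>v. \<mu> - v" "\<sigma>\<^sup>2" a x] i2 e0 e2 a0 by simp
    qed
    have meas: "A1 \<in> sets M" "A2 \<in> sets M" "A3 \<in> sets M" "A4 \<in> sets M"
      unfolding A1_def A2_def A3_def A4_def by measurable
    have fa: "(2 * K * a + eps) / (real n - 2 * K) \<le> thr"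
      unfolding thr_def
      by (rule final_alg[OF \<sigma>p _ K3 assms(9) _ K2 NK a_def eps_def]) (use n0 K1 in auto)
    have sub: "Ev \<subseteq> A1 \<union> A2 \<union> A3 \<union> A4"
    proof
      fix \<omega> assume \<omega>: "\<omega> \<in> Ev"
      show "\<omega> \<in> A1 \<union> A2 \<union> A3 \<union> A4"
      proof (rule ccontr)
        assume "\<omega> \<notin> A1 \<union> A2 \<union> A3 \<union> A4"
        hence n1: "(\<Sum>i<n. indicator {\<mu>+a<..} (X i \<omega>)) < K + 1"
          and n2: "(\<Sum>i<n. indicator {..<\<mu>-a} (X i \<omega>)) < K + 1"
          and n3: "(\<Sum>i<n. clip a (X i \<omega> - \<mu>)) < eps"
          and n4: "(\<Sum>i<n. clip a (\<mu> - X i \<omega>)) < eps"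
          using \<omega> by (auto simp: A1_def A2_def A3_def A4_def Ev_def)
        define xs where "xs = map (\<lambda>i. X i \<omega>) [0..<n]"
        have lxs: "length xs = n" by (simp add: xs_def)
        have c1: "length (filter (\<lambda>v. v > \<mu> + a) xs) \<le> k"
        proof -
          have "filter (\<lambda>v. v > \<mu> + a) xs = filter (\<lambda>v. v \<in> {\<mu>+a<..}) xs" by simp
          hence "real (length (filter (\<lambda>v. v > \<mu> + a) xs)) < K + 1"
            using n1 len_filter_map_upt[of "{\<mu>+a<..}" "\<lambda>i. X i \<omega>" n] by (simp add: xs_def)
          thus ?thesis unfolding K_def by linarith
        qed
        have c2: "length (filter (\<lambda>v. v < \<mu> - a) xs) \<le> k"
        proof -
          have "filter (\<lambda>v. v < \<mu> - a) xs = filter (\<lambda>v. v \<in> {..<\<mu>-a}) xs" by simp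
          hence "real (length (filter (\<lambda>v. v < \<mu> - a) xs)) < K + 1"
            using n2 len_filter_map_upt[of "{..<\<mu>-a}" "\<lambda>i. X i \<omega>" n] by (simp add: xs_def)
          thus ?thesis unfolding K_def by linarith
        qed
        have D: "\<bar>(\<Sum>i=k..<n-k. sort xs ! i) - real (n-2*k) * \<mu> - (\<Sum>v\<leftarrow>xs. clip a (v - \<mu>))\<bar> \<le> 2 * real k * a"
          by (rule trim_det[OF lxs nk _ c1 c2]) (use a0 in simp)
        have S: "(\<Sum>v\<leftarrow>xs. clip a (v - \<mu>)) = (\<Sum>i<n. clip a (X i \<omega> - \<mu>))"
          unfolding xs_def by (rule sum_list_map_upt)
        have S2: "(\<Sum>i<n. clip a (\<mu> - X i \<omega>)) = - (\<Sum>i<n. clip a (X i \<omega> - \<mu>))"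
        proof -
          have "(\<Sum>i<n. clip a (\<mu> - X i \<omega>)) = (\<Sum>i<n. - clip a (X i \<omega> - \<mu>))"
            by (intro sum.cong refl) (metis clip_neg a0 less_imp_le minus_diff_eq)
          thus ?thesis by (simp add: sum_negf)
        qed
        define T where "T = (\<Sum>i=k..<n-k. sort xs ! i)"
        have "\<bar>T - (real n - 2 * K) * \<mu>\<bar> < 2 * K * a + eps"
          using D n3 n4 unfolding S S2 rn T_def[symmetric] K_def by linarith
        moreover have "tm \<omega> = T / (real n - 2 * K)" unfolding tm_eq T_def xs_def ..
        moreover have pos: "real n - 2 * K > 0" using \<open>2 * K < real n\<close> by simp
        ultimately have "\<bar>tm \<omega> - \<mu>\<bar> < (2 * K * a + eps) / (real n - 2 * K)"
        proof -
          assume h1: "\<bar>T - (real n - 2 * K) * \<mu>\<bar> < 2 * K * a + eps"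
            and h2: "tm \<omega> = T / (real n - 2 * K)" and h3: "real n - 2 * K > 0"
          have "tm \<omega> - \<mu> = (T - (real n - 2 * K) * \<mu>) / (real n - 2 * K)"
            using h2 h3 by (simp add: field_simps)
          hence "\<bar>tm \<omega> - \<mu>\<bar> = \<bar>T - (real n - 2 * K) * \<mu>\<bar> / (real n - 2 * K)"
            using h3 by simp
          also have "\<dots> < (2 * K * a + eps) / (real n - 2 * K)"
            using h1 h3 by (rule divide_strict_right_mono)
          finally show ?thesis .
        qed
        hence "\<bar>tm \<omega> - \<mu>\<bar> < thr" using fa by linarith
        thus False using \<omega> by (simp add: Ev_def)
      qed
    qed
    have "measure M Ev \<le> measure M (A1 \<union> A2 \<union> A3 \<union> A4)"
      using sub meas by (intro P.finite_measure_mono) auto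
    also have "\<dots> \<le> measure M A1 + measure M A2 + measure M A3 + measure M A4"
    proof -
      have u1: "measure M (A1 \<union> A2 \<union> A3 \<union> A4) \<le> measure M (A1 \<union> A2 \<union> A3) + measure M A4"
        by (rule measure_Un_le) (use meas in auto)
      have u2: "measure M (A1 \<union> A2 \<union> A3) \<le> measure M (A1 \<union> A2) + measure M A3"
        by (rule measure_Un_le) (use meas in auto)
      have u3: "measure M (A1 \<union> A2) \<le> measure M A1 + measure M A2"
        by (rule measure_Un_le) (use meas in auto)
      show ?thesis using u1 u2 u3 by linarith
    qed
    also have "\<dots> \<le> 4 * exp (- (x\<^sup>2 / 2))" using b1 b2 b3 b4 by simp
    finally show ?thesis unfolding Ev_def thr_def tm_def k_def by simp
  qed
qed


end
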